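(* Let $p(L,M,D;\mu\to1)$ be a generative reasoning model, let $\alpha\in L$, and let $\Delta\subseteq L$ be finite. Then $$p(\alpha\mid\Delta)=\frac{\sum_{m\in[\![\Delta]\!]_p^{\max}\cap[\![\alpha]\!]_p}p(m)}{\sum_{m\in[\![\Delta]\!]_p^{\max}}p(m)}.$$
   Context: Fix a multiset of data $\{d_1,\dots,d_K\}$ with $K\ge1$, and a propositional language $L$ over finitely many atoms, with set of models (truth assignments) $\mathcal M$. A function $m:\{d_1,\dots,d_K\}\to\mathcal M$ assigns to each datum the model it supports. The probability of a model $n$ is $p(n)=|\{k:m(d_k)=n\}|/K$. For $\mu\in(0,1)$ and $\alpha\in L$, set $p(\alpha\mid m)=\mu$ if $m$ satisfies $\alpha$ and $1-\mu$ otherwise. For finite $\Delta$, set $p(\Delta\mid m)=\prod_{\beta\in\Delta}p(\beta\mid m)$, which is $1$ for empty $\Delta$. In $p(L,M,D;\mu\to1)$, $$p(\alpha\mid\Delta)=\lim_{\mu\to1^-}\frac{\sum_{m}p(\alpha\mid m)p(\Delta\mid m)p(m)}{\sum_m p(\Delta\mid m)p(m)}.$$ Notation and definitions: - For $S\subseteq L$, $[\![S]\!]$ is the set of models satisfying every formula of $S$, $[\![\alpha]\!]=[\![\{\alpha\}]\!]$, and $[\![S]\!]_p=\{m\in[\![S]\!]:p(m)\neq0\}$. - $S\subseteq\Delta$ is a maximal possible subset of $\Delta$ if $[\![S]\!]_p\neq\emptyset$ and $[\![S\cup\{\beta\}]\!]_p=\emptyset$ for all $\beta\in\Delta\setminus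 S$. - $MPS(\Delta)$ is the set of maximal possible subsets of $\Delta$ of maximum cardinality. - $[\![\Delta]\!]_p^{\max}=\bigcup_{S\in MPS(\Delta)}[\![S]\!]_p$. *)

theory Defs
  imports Complex_Main
begin

datatype 'a form = Atom 'a | TT | FF | Neg "'a form" | Conj "'a form" "'a form"
  | Disj "'a form" "'a form" | Imp "'a form" "'a form"

type_synonym 'a model = "'a \<Rightarrow> bool"

fun sat :: "'a model \<Rightarrow> 'a form \<Rightarrow> bool" where
  "sat v (Atom a) = v a"
| "sat v TT = True"
| "sat v FF = False"
| "sat v (Neg f) = (\<not> sat v f)"
| "sat v (Conj f g) = (sat v f \<and> sat v g)"
| "sat v (Disj f g) = (sat v f \<or> sat v g)"
| "sat v (Imp f g) = (sat v f \<longrightarrow> sat v g)"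

text \<open>Data D = [d_1,...,d_K] (a list, i.e. a multiset with order), m maps data to models.
  p(n) = |{k. m(d_k) = n}| / K.\<close>
definition prob :: "'d list \<Rightarrow> ('d \<Rightarrow> 'a model) \<Rightarrow> 'a model \<Rightarrow> real" where
  "prob D m n = real (card {k. k < length D \<and> m (D ! k) = n}) / real (length D)"

definition lik :: "real \<Rightarrow> 'a form \<Rightarrow> 'a model \<Rightarrow> real" where
  "lik \<mu> \<alpha> n = (if sat n \<alpha> then \<mu> else 1 - \<mu>)"

definition likS :: "real \<Rightarrow> 'a form set \<Rightarrow> 'a model \<Rightarrow> real" where
  "likS \<mu> \<Delta> n = (\<Prod>\<beta>\<in>\<Delta>. lik \<mu> \<beta> n)"

text \<open>The ratio inside the limit defining p(alpha | Delta).\<close>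
definition cond_ratio :: "'d list \<Rightarrow> ('d \<Rightarrow> ('a::finite) model) \<Rightarrow> real \<Rightarrow> 'a form \<Rightarrow> 'a form set \<Rightarrow> real" where
  "cond_ratio D m \<mu> \<alpha> \<Delta> =
     (\<Sum>n\<in>UNIV. lik \<mu> \<alpha> n * likS \<mu> \<Delta> n * prob D m n) / (\<Sum>n\<in>UNIV. likS \<mu> \<Delta> n * prob D m n)"

definition models :: "'a form set \<Rightarrow> 'a model set" where
  "models S = {n. \<forall>\<beta>\<in>S. sat n \<beta>}"

definition models_p :: "'d list \<Rightarrow> ('d \<Rightarrow> 'a model) \<Rightarrow> 'a form set \<Rightarrow> 'a model set" where
  "models_p D m S = {n \<in> models S. prob D m n \<noteq> 0}"

definition max_possible_subset :: "'d list \<Rightarrow> ('d \<Rightarrow> 'a model) \<Rightarrow> 'a form set \<Rightarrow> 'a form set \<Rightarrow> bool" where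
  "max_possible_subset D m \<Delta> S \<longleftrightarrow> S \<subseteq> \<Delta> \<and> models_p D m S \<noteq> {} \<and>
     (\<forall>\<beta>\<in>\<Delta> - S. models_p D m (insert \<beta> S) = {})"

definition MPS :: "'d list \<Rightarrow> ('d \<Rightarrow> 'a model) \<Rightarrow> 'a form set \<Rightarrow> 'a form set set" where
  "MPS D m \<Delta> = {S. max_possible_subset D m \<Delta> S \<and>
     (\<forall>S'. max_possible_subset D m \<Delta> S' \<longrightarrow> card S' \<le> card S)}"

definition models_p_max :: "'d list \<Rightarrow> ('d \<Rightarrow> 'a model) \<Rightarrow> 'a form set \<Rightarrow> 'a model set" where
  "models_p_max D m \<Delta> = (\<Union>S\<in>MPS D m \<Delta>. models_p D m S)"

end

theory Submission
  imports Defs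
begin

definition sc :: "'a form set \<Rightarrow> 'a model \<Rightarrow> nat" where
  "sc \<Delta> n = card {\<beta>\<in>\<Delta>. sat n \<beta>}"

lemma prob_nonneg: "prob D m n \<ge> 0"
  unfolding prob_def by simp

lemma prob_ne: assumes "D \<noteq> []" shows "prob D m (m (D!0)) \<noteq> 0"
proof -
  have "0 \<in> {k. k < length D \<and> m (D ! k) = m (D!0)}" using assms by simp
  moreover have "finite {k. k < length D \<and> m (D ! k) = m (D!0)}" by simp
  ultimately have "card {k. k < length D \<and> m (D ! k) = m (D!0)} \<noteq> 0"
    by (metis card_0_eq empty_iff)
  then show ?thesis using assms unfolding prob_def by simp
qed

lemma likS_eq:
  assumes "finite \<Delta>"
  shows "likS \<mu> \<Delta> n = \<mu> ^ (sc \<Delta> n) * (1-\<mu>) ^ (card \<Delta> - sc \<Delta> n)"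
proof -
  have "likS \<mu> \<Delta> n = prod (\<lambda>_. \<mu>) (\<Delta> \<inter> {x. sat n x}) * prod (\<lambda>_. 1-\<mu>) (\<Delta> \<inter> - {x. sat n x})"
    unfolding likS_def lik_def by (rule prod.If_cases[OF assms, of "\<lambda>x. sat n x" "\<lambda>_. \<mu>" "\<lambda>_. 1-\<mu>"])
  moreover have "\<Delta> \<inter> {x. sat n x} = {\<beta>\<in>\<Delta>. sat n \<beta>}" by auto
  moreover have "\<Delta> \<inter> - {x. sat n x} = \<Delta> - {\<beta>\<in>\<Delta>. sat n \<beta>}" by auto
  moreover have "card (\<Delta> - {\<beta>\<in>\<Delta>. sat n \<beta>}) = card \<Delta> - sc \<Delta> n"
    unfolding sc_def using assms by (simp add: card_Diff_subset)
  ultimately show ?thesis unfolding sc_def by simp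
qed

lemma sc_le: "finite \<Delta> \<Longrightarrow> sc \<Delta> n \<le> card \<Delta>"
  unfolding sc_def by (intro card_mono) auto

lemma Mx_char:
  fixes D :: "'d list" and m :: "'d \<Rightarrow> ('a::finite) model" and \<Delta> :: "'a form set"
  assumes D: "D \<noteq> []" and fin: "finite \<Delta>"
  defines "s \<equiv> Max (sc \<Delta> ` {n. prob D m n \<noteq> 0})"
  shows "n \<in> models_p_max D m \<Delta> \<longleftrightarrow> prob D m n \<noteq> 0 \<and> sc \<Delta> n = s"
proof -
  let ?P = "{n. prob D m n \<noteq> 0}"
  have finP: "finite ?P" by simp
  have Pne: "?P \<noteq> {}" using prob_ne[OF D] by blast
  have sle: "sc \<Delta> n \<le> s" if "prob D m n \<noteq> 0" for n
    unfolding s_def using that finP by (intro Max_ge) auto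
  have "s \<in> sc \<Delta> ` ?P" unfolding s_def using finP Pne by (intro Max_in) auto
  then obtain n0 where n0: "prob D m n0 \<noteq> 0" "sc \<Delta> n0 = s" by auto
  have L1: "card S \<le> s" if hS: "S \<subseteq> \<Delta>" "models_p D m S \<noteq> {}" for S
  proof -
    obtain n where n: "n \<in> models_p D m S" using hS by blast
    then have "S \<subseteq> {\<beta>\<in>\<Delta>. sat n \<beta>}" using hS unfolding models_p_def models_def by auto
    then have "card S \<le> sc \<Delta> n" unfolding sc_def using fin by (intro card_mono) auto
    also have "\<dots> \<le> s" using n sle unfolding models_p_def by auto
    finally show ?thesis .
  qed
  have L2: "max_possible_subset D m \<Delta> {\<beta>\<in>\<Delta>. sat n \<beta>}" if "prob D m n \<noteq> 0" "sc \<Delta> n = s" for n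
  proof -
    have "n \<in> models_p D m {\<beta>\<in>\<Delta>. sat n \<beta>}" using that unfolding models_p_def models_def by auto
    moreover have "models_p D m (insert \<beta> {\<beta>\<in>\<Delta>. sat n \<beta>}) = {}" if "\<beta> \<in> \<Delta> - {\<beta>\<in>\<Delta>. sat n \<beta>}" for \<beta>
    proof (rule ccontr)
      assume "models_p D m (insert \<beta> {\<beta>\<in>\<Delta>. sat n \<beta>}) \<noteq> {}"
      then have "card (insert \<beta> {\<beta>\<in>\<Delta>. sat n \<beta>}) \<le> s" using L1 that by auto
      moreover have "card (insert \<beta> {\<beta>\<in>\<Delta>. sat n \<beta>}) = Suc s"
        using that fin \<open>sc \<Delta> n = s\<close> unfolding sc_def by simp
      ultimately show False by simp
    qed
    ultimately show ?thesis unfolding max_possible_subset_def by blast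
  qed
  have L3: "{\<beta>\<in>\<Delta>. sat n \<beta>} \<in> MPS D m \<Delta>" if "prob D m n \<noteq> 0" "sc \<Delta> n = s" for n
    using L2[OF that] L1 that unfolding MPS_def max_possible_subset_def sc_def by auto
  show ?thesis
  proof
    assume "n \<in> models_p_max D m \<Delta>"
    then obtain S where S: "S \<in> MPS D m \<Delta>" "n \<in> models_p D m S" unfolding models_p_max_def by auto
    have pn: "prob D m n \<noteq> 0" using S unfolding models_p_def by auto
    have "S \<subseteq> {\<beta>\<in>\<Delta>. sat n \<beta>}" using S unfolding models_p_def models_def MPS_def max_possible_subset_def by auto
    then have "card S \<le> sc \<Delta> n" unfolding sc_def using fin by (intro card_mono) auto
    moreover have "s \<le> card S" using S L2[OF n0] n0(2) unfolding MPS_def sc_def by auto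
    ultimately show "prob D m n \<noteq> 0 \<and> sc \<Delta> n = s" using sle[OF pn] pn by simp
  next
    assume h: "prob D m n \<noteq> 0 \<and> sc \<Delta> n = s"
    have "n \<in> models_p D m {\<beta>\<in>\<Delta>. sat n \<beta>}" using h unfolding models_p_def models_def by auto
    then show "n \<in> models_p_max D m \<Delta>" using L3 h unfolding models_p_max_def by blast
  qed
qed

lemma g_lim:
  fixes k :: nat and p :: real
  shows "((\<lambda>\<mu>::real. (1-\<mu>)^k / \<mu>^k * p) \<longlongrightarrow> (if k = 0 then p else 0)) (at_left 1)"
proof -
  have "((\<lambda>\<mu>::real. (1-\<mu>)^k / \<mu>^k * p) \<longlongrightarrow> (1-1)^k / 1^k * p) (at_left 1)"
    by (intro tendsto_intros) auto
  then show ?thesis by (cases k) auto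
qed

theorem theorem4:
  fixes D :: "'d list" and m :: "'d \<Rightarrow> ('a::finite) model"
    and \<alpha> :: "'a form" and \<Delta> :: "'a form set"
  assumes "D \<noteq> []" and "finite \<Delta>"
  shows "((\<lambda>\<mu>. cond_ratio D m \<mu> \<alpha> \<Delta>) \<longlongrightarrow>
           (\<Sum>n\<in>models_p_max D m \<Delta> \<inter> models_p D m {\<alpha>}. prob D m n)
             / (\<Sum>n\<in>models_p_max D m \<Delta>. prob D m n)) (at_left 1)"
proof -
  define s where "s = Max (sc \<Delta> ` {n. prob D m n \<noteq> 0})"
  define Mx where "Mx = models_p_max D m \<Delta>"
  define N where "N = card \<Delta>"
  define c where "c = (\<lambda>\<mu>::real. \<mu>^s * (1-\<mu>)^(N-s))"
  define pr where "pr = prob D m"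
  have Mx: "n \<in> Mx \<longleftrightarrow> pr n \<noteq> 0 \<and> sc \<Delta> n = s" for n
    unfolding Mx_def s_def pr_def using Mx_char[OF assms] by blast
  let ?P = "{n. pr n \<noteq> 0}"
  have finP: "finite ?P" by simp
  have sle: "sc \<Delta> n \<le> s" if "pr n \<noteq> 0" for n
    unfolding s_def pr_def using that finP unfolding pr_def by (intro Max_ge) auto
  have Pne: "?P \<noteq> {}" using prob_ne[OF assms(1)] unfolding pr_def by blast
  have "s \<in> sc \<Delta> ` ?P" unfolding s_def pr_def using finP Pne unfolding pr_def by (intro Max_in) auto
  then obtain n0 where n0: "pr n0 \<noteq> 0" "sc \<Delta> n0 = s" by auto
  have sN: "s \<le> N" using n0 sc_le[OF assms(2)] unfolding N_def by metis
  have ev: "eventually (\<lambda>\<mu>::real. \<mu> \<in> {0<..<1}) (at_left 1)"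
    using eventually_at_left_real[of 0 1] by simp
  have glim: "((\<lambda>\<mu>. likS \<mu> \<Delta> n * pr n / c \<mu>) \<longlongrightarrow> (if n \<in> Mx then pr n else 0)) (at_left 1)" for n
  proof (cases "pr n = 0")
    case True
    then show ?thesis using Mx by simp
  next
    case False
    define k where "k = s - sc \<Delta> n"
    have sk: "s = sc \<Delta> n + k" "N - sc \<Delta> n = (N - s) + k"
      using sle[OF False] sN unfolding k_def by auto
    have E: "eventually (\<lambda>\<mu>. (1-\<mu>)^k / \<mu>^k * pr n = likS \<mu> \<Delta> n * pr n / c \<mu>) (at_left 1)"
      using ev
    proof (rule eventually_mono)
      fix \<mu> :: real assume "\<mu> \<in> {0<..<1}"
      then have pos: "\<mu> > 0" "1 - \<mu> > 0" by auto
      show "(1-\<mu>)^k / \<mu>^k * pr n = likS \<mu> \<Delta> n * pr n / c \<mu>"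
      proof -
        have "likS \<mu> \<Delta> n * pr n / c \<mu> =
            \<mu> ^ sc \<Delta> n * ((1-\<mu>)^(N-s) * (1-\<mu>)^k) * pr n / ((\<mu>^sc \<Delta> n * \<mu>^k) * (1-\<mu>)^(N-s))"
          unfolding likS_eq[OF assms(2)] c_def N_def[symmetric] sk(2)
          by (subst (2) sk(1)) (simp only: power_add)
        also have "\<dots> = (1-\<mu>)^k / \<mu>^k * pr n"
          using pos by (simp add: field_simps)
        finally show ?thesis by simp
      qed
    qed
    have V: "(if k = 0 then pr n else 0) = (if n \<in> Mx then pr n else 0)"
      using Mx False sle[OF False] unfolding k_def by auto
    have "((\<lambda>\<mu>. likS \<mu> \<Delta> n * pr n / c \<mu>) \<longlongrightarrow> (if k = 0 then pr n else 0)) (at_left 1)"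
      by (rule Lim_transform_eventually[OF g_lim[of k "pr n"] E])
    then show ?thesis unfolding V .
  qed
  have llim: "((\<lambda>\<mu>. lik \<mu> \<alpha> n) \<longlongrightarrow> (if sat n \<alpha> then 1 else 0)) (at_left 1)" for n
  proof (cases "sat n \<alpha>")
    case True
    then show ?thesis unfolding lik_def by (simp add: tendsto_ident_at)
  next
    case False
    have "((\<lambda>\<mu>::real. 1 - \<mu>) \<longlongrightarrow> 1 - 1) (at_left 1)" by (intro tendsto_intros)
    then show ?thesis using False unfolding lik_def by simp
  qed
  have numlim: "((\<lambda>\<mu>. \<Sum>n\<in>UNIV. lik \<mu> \<alpha> n * (likS \<mu> \<Delta> n * pr n / c \<mu>)) \<longlongrightarrow>
      (\<Sum>n\<in>UNIV. (if sat n \<alpha> then 1 else 0) * (if n \<in> Mx then pr n else 0))) (at_left 1)"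
    by (intro tendsto_sum tendsto_mult llim glim)
  have denlim: "((\<lambda>\<mu>. \<Sum>n\<in>UNIV. likS \<mu> \<Delta> n * pr n / c \<mu>) \<longlongrightarrow>
      (\<Sum>n\<in>UNIV. (if n \<in> Mx then pr n else 0))) (at_left 1)"
    by (intro tendsto_sum glim)
  have e1: "(\<Sum>n\<in>UNIV. (if sat n \<alpha> then 1 else 0) * (if n \<in> Mx then pr n else 0))
      = (\<Sum>n\<in>Mx \<inter> models_p D m {\<alpha>}. pr n)"
  proof -
    have "(\<Sum>n\<in>UNIV. (if sat n \<alpha> then 1 else 0) * (if n \<in> Mx then pr n else 0))
        = (\<Sum>n\<in>UNIV. if n \<in> Mx \<inter> models_p D m {\<alpha>} then pr n else 0)"
      by (intro sum.cong) (auto simp: Mx models_p_def models_def pr_def)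
    also have "\<dots> = (\<Sum>n\<in>Mx \<inter> models_p D m {\<alpha>}. pr n)"
      using sum.inter_restrict[of UNIV pr "Mx \<inter> models_p D m {\<alpha>}"] by simp
    finally show ?thesis .
  qed
  have e2: "(\<Sum>n\<in>UNIV. (if n \<in> Mx then pr n else 0)) = (\<Sum>n\<in>Mx. pr n)"
    using sum.inter_restrict[of UNIV pr Mx] by simp
  have pos: "(\<Sum>n\<in>Mx. pr n) > 0"
  proof -
    have "n0 \<in> Mx" using Mx n0 by auto
    moreover have "\<forall>n\<in>Mx. pr n > 0" using Mx prob_nonneg unfolding pr_def
      by (metis less_eq_real_def)
    ultimately show ?thesis by (intro sum_pos) auto
  qed
  have q: "((\<lambda>\<mu>. (\<Sum>n\<in>UNIV. lik \<mu> \<alpha> n * (likS \<mu> \<Delta> n * pr n / c \<mu>)) /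
        (\<Sum>n\<in>UNIV. likS \<mu> \<Delta> n * pr n / c \<mu>)) \<longlongrightarrow>
      (\<Sum>n\<in>Mx \<inter> models_p D m {\<alpha>}. pr n) / (\<Sum>n\<in>Mx. pr n)) (at_left 1)"
    using tendsto_divide[OF numlim denlim] pos e1 e2 by simp
  have "eventually (\<lambda>\<mu>. (\<Sum>n\<in>UNIV. lik \<mu> \<alpha> n * (likS \<mu> \<Delta> n * pr n / c \<mu>)) /
        (\<Sum>n\<in>UNIV. likS \<mu> \<Delta> n * pr n / c \<mu>) = cond_ratio D m \<mu> \<alpha> \<Delta>) (at_left 1)"
    using ev
  proof (rule eventually_mono)
    fix \<mu> :: real assume "\<mu> \<in> {0<..<1}"
    then have "c \<mu> \<noteq> 0" unfolding c_def by auto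
    moreover have "(\<Sum>n\<in>UNIV. lik \<mu> \<alpha> n * (likS \<mu> \<Delta> n * pr n / c \<mu>)) =
        (\<Sum>n\<in>UNIV. lik \<mu> \<alpha> n * likS \<mu> \<Delta> n * pr n) / c \<mu>"
      by (simp add: sum_divide_distrib mult.assoc)
    moreover have "(\<Sum>n\<in>UNIV. likS \<mu> \<Delta> n * pr n / c \<mu>) =
        (\<Sum>n\<in>UNIV. likS \<mu> \<Delta> n * pr n) / c \<mu>"
      by (simp add: sum_divide_distrib)
    ultimately show "(\<Sum>n\<in>UNIV. lik \<mu> \<alpha> n * (likS \<mu> \<Delta> n * pr n / c \<mu>)) /
        (\<Sum>n\<in>UNIV. likS \<mu> \<Delta> n * pr n / c \<mu>) = cond_ratio D m \<mu> \<alpha> \<Delta>"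
      unfolding cond_ratio_def pr_def by simp
  qed
  with q have "((\<lambda>\<mu>. cond_ratio D m \<mu> \<alpha> \<Delta>) \<longlongrightarrow>
      (\<Sum>n\<in>Mx \<inter> models_p D m {\<alpha>}. pr n) / (\<Sum>n\<in>Mx. pr n)) (at_left 1)"
    by (rule Lim_transform_eventually)
  then show ?thesis unfolding Mx_def pr_def .
qed

end
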